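(* If $X$ and $Y$ are metric spaces with asymptotic property C, then the product $X\times Y$ has asymptotic property C.
   Context: For $R>0$, a family $\mathcal U$ of nonempty subsets of a metric space is $R$-disjoint if $d(A,B)>R$ for all distinct $A,B\in\mathcal U$, where $d(A,B)=\inf\{d(a,b):a\in A,b\in B\}$. A family $\mathcal U$ is uniformly bounded if $\sup\{\operatorname{diam}U:U\in\mathcal U\}<\infty$. A metric space $X$ has asymptotic property C if for every sequence $R_0\le R_1\le R_2\le\cdots$ of positive reals there exist $n\ge 0$ and uniformly bounded $R_i$-disjoint families $\mathcal U_i$ ($i=0,\dots,n$) of subsets of $X$ such that $\bigcup_{i=0}^n\mathcal U_i$ covers $X$. The product $X\times Y$ carries any of the standard product metrics (e.g. $d((x,y),(x',y'))=\max(d_X(x,x'),d_Y(y,y'))$ or the sum metric; these are bi-Lipschitz equivalent). *)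

theory Defs
  imports "HOL-Analysis.Analysis"
begin

definition R_disjoint :: "real \<Rightarrow> 'a::metric_space set set \<Rightarrow> bool" where
  "R_disjoint R \<U> \<longleftrightarrow> (\<forall>A\<in>\<U>. A \<noteq> {}) \<and>
     (\<forall>A\<in>\<U>. \<forall>B\<in>\<U>. A \<noteq> B \<longrightarrow> setdist A B > R)"

definition uniformly_bounded :: "'a::metric_space set set \<Rightarrow> bool" where
  "uniformly_bounded \<U> \<longleftrightarrow> (\<exists>D. \<forall>U\<in>\<U>. \<forall>x\<in>U. \<forall>y\<in>U. dist x y \<le> D)"

definition asymptotic_property_C :: "'a::metric_space set \<Rightarrow> bool" where
  "asymptotic_property_C S \<longleftrightarrow>
    (\<forall>R :: nat \<Rightarrow> real. (\<forall>i. R i > 0) \<and> mono R \<longrightarrow>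
      (\<exists>n. \<exists>\<U> :: nat \<Rightarrow> 'a set set.
         (\<forall>i\<le>n. (\<forall>U\<in>\<U> i. U \<subseteq> S) \<and> uniformly_bounded (\<U> i) \<and> R_disjoint (R i) (\<U> i)) \<and>
         S \<subseteq> (\<Union>i\<le>n. \<Union>(\<U> i))))"

end

theory Submission
  imports Defs
begin

lemma dist_pair_le:
  fixes a c :: "'a::metric_space" and b d :: "'b::metric_space"
  shows "dist (a,b) (c,d) \<le> dist a c + dist b d"
proof -
  have "dist (a,b) (c,d) \<le> dist (a,b) (c,b) + dist (c,b) (c,d)" by (rule dist_triangle)
  also have "dist (a,b) (c,b) = dist a c" by (simp add: dist_Pair_Pair)
  also have "dist (c,b) (c,d) = dist b d" by (simp add: dist_Pair_Pair)
  finally show ?thesis .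
qed

lemma R_disjoint_mono: "R_disjoint r A \<Longrightarrow> r' \<le> r \<Longrightarrow> R_disjoint r' A"
  unfolding R_disjoint_def by force

lemma R_disjoint_prod:
  fixes A :: "'a::metric_space set set" and B :: "'b::metric_space set set"
  assumes "R_disjoint r A" "R_disjoint r B"
  shows "R_disjoint r {U \<times> V | U V. U \<in> A \<and> V \<in> B}"
  unfolding R_disjoint_def
proof (intro conjI ballI impI)
  fix W assume "W \<in> {U \<times> V | U V. U \<in> A \<and> V \<in> B}"
  then show "W \<noteq> {}" using assms unfolding R_disjoint_def by auto
next
  fix W W' assume W: "W \<in> {U \<times> V | U V. U \<in> A \<and> V \<in> B}"
    and W': "W' \<in> {U \<times> V | U V. U \<in> A \<and> V \<in> B}" and ne: "W \<noteq> W'"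
  obtain U V where UV: "W = U \<times> V" "U \<in> A" "V \<in> B" using W by auto
  obtain U' V' where UV': "W' = U' \<times> V'" "U' \<in> A" "V' \<in> B" using W' by auto
  have nz: "U \<noteq> {}" "V \<noteq> {}" "U' \<noteq> {}" "V' \<noteq> {}" using assms UV UV' unfolding R_disjoint_def by auto
  show "r < setdist W W'"
  proof (cases "U = U'")
    case False
    then have s: "r < setdist U U'" using assms(1) UV UV' unfolding R_disjoint_def by auto
    have "setdist U U' \<le> setdist W W'"
    proof (rule le_setdistI)
      show "W \<noteq> {}" "W' \<noteq> {}" using nz UV UV' by auto
      fix p q assume "p \<in> W" "q \<in> W'"
      then have "fst p \<in> U" "fst q \<in> U'" using UV UV' by auto
      then have "setdist U U' \<le> dist (fst p) (fst q)" by (rule setdist_le_dist)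
      also have "\<dots> \<le> dist p q" by (rule dist_fst_le)
      finally show "setdist U U' \<le> dist p q" .
    qed
    then show ?thesis using s by linarith
  next
    case True
    then have "V \<noteq> V'" using ne UV UV' by auto
    then have s: "r < setdist V V'" using assms(2) UV UV' unfolding R_disjoint_def by auto
    have "setdist V V' \<le> setdist W W'"
    proof (rule le_setdistI)
      show "W \<noteq> {}" "W' \<noteq> {}" using nz UV UV' by auto
      fix p q assume "p \<in> W" "q \<in> W'"
      then have "snd p \<in> V" "snd q \<in> V'" using UV UV' by auto
      then have "setdist V V' \<le> dist (snd p) (snd q)" by (rule setdist_le_dist)
      also have "\<dots> \<le> dist p q" by (rule dist_snd_le)
      finally show "setdist V V' \<le> dist p q" .
    qed
    then show ?thesis using s by linarith
  qed
qed

lemma ub_prod: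
  fixes A :: "'a::metric_space set set" and B :: "'b::metric_space set set"
  assumes "uniformly_bounded A" "uniformly_bounded B"
  shows "uniformly_bounded {U \<times> V | U V. U \<in> A \<and> V \<in> B}"
proof -
  obtain D where D: "\<forall>U\<in>A. \<forall>x\<in>U. \<forall>y\<in>U. dist x y \<le> D" using assms(1) unfolding uniformly_bounded_def by auto
  obtain E where E: "\<forall>U\<in>B. \<forall>x\<in>U. \<forall>y\<in>U. dist x y \<le> E" using assms(2) unfolding uniformly_bounded_def by auto
  show ?thesis unfolding uniformly_bounded_def
  proof (intro exI[of _ "D+E"] ballI)
    fix W p q assume "W \<in> {U \<times> V | U V. U \<in> A \<and> V \<in> B}" "p \<in> W" "q \<in> W"
    then obtain U V where "U \<in> A" "V \<in> B" "p \<in> U \<times> V" "q \<in> U \<times> V" by auto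
    then have "dist (fst p) (fst q) \<le> D" "dist (snd p) (snd q) \<le> E" using D E by auto
    moreover have "dist p q \<le> dist (fst p) (fst q) + dist (snd p) (snd q)"
      using dist_pair_le[of "fst p" "snd p" "fst q" "snd q"] by simp
    ultimately show "dist p q \<le> D + E" by linarith
  qed
qed

theorem theorem3p1:
  fixes X :: "'a::metric_space set" and Y :: "'b::metric_space set"
  assumes "asymptotic_property_C X" and "asymptotic_property_C Y"
  shows "asymptotic_property_C (X \<times> Y)"
  unfolding asymptotic_property_C_def
proof (intro allI impI)
  fix R :: "nat \<Rightarrow> real"
  assume RR: "(\<forall>i. R i > 0) \<and> mono R"
  have Rpos: "\<And>i. R i > 0" and Rmono: "\<And>i j. i \<le> j \<Longrightarrow> R i \<le> R j"
    using RR by (auto simp: mono_def)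
  have "\<forall>k. \<exists>n \<V>. (\<forall>j\<le>n. (\<forall>V\<in>\<V> j. V \<subseteq> Y) \<and> uniformly_bounded (\<V> j) \<and> R_disjoint (R (k+j)) (\<V> j))
           \<and> Y \<subseteq> (\<Union>j\<le>n. \<Union>(\<V> j))"
  proof
    fix k
    have "(\<forall>i. R (k+i) > 0) \<and> mono (\<lambda>i. R (k+i))"
      using Rpos Rmono by (auto simp: mono_def)
    from assms(2)[unfolded asymptotic_property_C_def, rule_format, OF this]
    show "\<exists>n \<V>. (\<forall>j\<le>n. (\<forall>V\<in>\<V> j. V \<subseteq> Y) \<and> uniformly_bounded (\<V> j) \<and> R_disjoint (R (k+j)) (\<V> j))
           \<and> Y \<subseteq> (\<Union>j\<le>n. \<Union>(\<V> j))" .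
  qed
  then obtain N :: "nat \<Rightarrow> nat" and VV :: "nat \<Rightarrow> nat \<Rightarrow> 'b set set" where
    NV: "\<And>k. (\<forall>j\<le>N k. (\<forall>V\<in>VV k j. V \<subseteq> Y) \<and> uniformly_bounded (VV k j) \<and> R_disjoint (R (k+j)) (VV k j))
           \<and> Y \<subseteq> (\<Union>j\<le>N k. \<Union>(VV k j))"
    by metis
  define kk where "kk = rec_nat 0 (\<lambda>i a. a + N a + 1)"
  have kk0: "kk 0 = 0" and kkS: "\<And>i. kk (Suc i) = kk i + N (kk i) + 1"
    by (simp_all add: kk_def)
  have smk: "strict_mono kk" by (rule strict_monoI_Suc) (simp add: kkS)
  define T where "T i = R (kk i + N (kk i))" for i
  have Tok: "(\<forall>i. T i > 0) \<and> mono T"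
  proof
    show "\<forall>i. T i > 0" using Rpos by (simp add: T_def)
    show "mono T"
    proof (rule incseq_SucI)
      fix i show "T i \<le> T (Suc i)" unfolding T_def by (rule Rmono) (simp add: kkS)
    qed
  qed
  obtain nX UU where UU: "\<forall>i\<le>nX. (\<forall>U\<in>UU i. U \<subseteq> X) \<and> uniformly_bounded (UU i) \<and> R_disjoint (T i) (UU i)"
    and Xcov: "X \<subseteq> (\<Union>i\<le>nX. \<Union>(UU i))"
    using assms(1)[unfolded asymptotic_property_C_def, rule_format, OF Tok] by blast
  define P where "P i m = {U \<times> V | U V. U \<in> UU i \<and> V \<in> VV (kk i) (m - kk i)}" for i m
  define W where "W m = (\<Union>i\<in>{i. i \<le> nX \<and> kk i \<le> m \<and> m < kk (Suc i)}. P i m)" for m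
  have uniq: "i = i'" if "kk i \<le> m" "m < kk (Suc i)" "kk i' \<le> m" "m < kk (Suc i')" for i i' m
  proof (rule ccontr)
    assume "i \<noteq> i'"
    then have "Suc i \<le> i' \<or> Suc i' \<le> i" by linarith
    then have "kk (Suc i) \<le> kk i' \<or> kk (Suc i') \<le> kk i"
      using smk strict_mono_less_eq by blast
    then show False using that by linarith
  qed
  have Weq: "W m = P i m" if "i \<le> nX" "kk i \<le> m" "m < kk (Suc i)" for i m
  proof -
    have "{i. i \<le> nX \<and> kk i \<le> m \<and> m < kk (Suc i)} = {i}"
      using that uniq by blast
    then show ?thesis by (simp add: W_def)
  qed
  have Wempty: "W m = {}" if "\<not> (\<exists>i. i \<le> nX \<and> kk i \<le> m \<and> m < kk (Suc i))" for m
    using that by (auto simp: W_def)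
  show "\<exists>n \<U>. (\<forall>i\<le>n. (\<forall>U\<in>\<U> i. U \<subseteq> X \<times> Y) \<and> uniformly_bounded (\<U> i) \<and> R_disjoint (R i) (\<U> i)) \<and>
            X \<times> Y \<subseteq> (\<Union>i\<le>n. \<Union>(\<U> i))"
  proof (intro exI[of _ "kk (Suc nX)"] exI[of _ W] conjI)
   show "\<forall>m\<le>kk (Suc nX). (\<forall>U\<in>W m. U \<subseteq> X \<times> Y) \<and> uniformly_bounded (W m) \<and> R_disjoint (R m) (W m)"
   proof (intro allI impI)
    fix m assume "m \<le> kk (Suc nX)"
    show "(\<forall>U\<in>W m. U \<subseteq> X \<times> Y) \<and> uniformly_bounded (W m) \<and> R_disjoint (R m) (W m)"
    proof (cases "\<exists>i. i \<le> nX \<and> kk i \<le> m \<and> m < kk (Suc i)")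
      case False
      then show ?thesis by (simp add: Wempty R_disjoint_def uniformly_bounded_def)
    next
      case True
      then obtain i where i: "i \<le> nX" "kk i \<le> m" "m < kk (Suc i)" by blast
      define j where "j = m - kk i"
      have j: "j \<le> N (kk i)" "m = kk i + j" using i by (auto simp: j_def kkS)
      have U: "(\<forall>U\<in>UU i. U \<subseteq> X) \<and> uniformly_bounded (UU i) \<and> R_disjoint (T i) (UU i)"
        using UU i by blast
      have V: "(\<forall>V\<in>VV (kk i) j. V \<subseteq> Y) \<and> uniformly_bounded (VV (kk i) j) \<and> R_disjoint (R (kk i + j)) (VV (kk i) j)"
        using NV j by blast
      have "R m \<le> T i" unfolding T_def using j by (intro Rmono) simp
      then have Ud: "R_disjoint (R m) (UU i)" using U R_disjoint_mono by blast
      have Pm: "P i m = {U \<times> V | U V. U \<in> UU i \<and> V \<in> VV (kk i) j}"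
        by (simp add: P_def j_def)
      show ?thesis unfolding Weq[OF i] Pm
      proof (intro conjI)
        show "\<forall>Ua\<in>{U \<times> V |U V. U \<in> UU i \<and> V \<in> VV (kk i) j}. Ua \<subseteq> X \<times> Y"
          using U V by blast
        show "uniformly_bounded {U \<times> V |U V. U \<in> UU i \<and> V \<in> VV (kk i) j}"
          using ub_prod U V by blast
        show "R_disjoint (R m) {U \<times> V |U V. U \<in> UU i \<and> V \<in> VV (kk i) j}"
          using R_disjoint_prod[OF Ud, of "VV (kk i) j"] V j by simp
      qed
    qed
   qed
  next
    show "X \<times> Y \<subseteq> (\<Union>i\<le>kk (Suc nX). \<Union>(W i))"
    proof
      fix p assume "p \<in> X \<times> Y"
      then obtain x y where p: "p = (x,y)" "x \<in> X" "y \<in> Y" by auto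
      from Xcov p(2) have "x \<in> (\<Union>i\<le>nX. \<Union>(UU i))" by (rule subsetD)
      then obtain i U where iU: "i \<le> nX" "U \<in> UU i" "x \<in> U" by auto
      have "y \<in> (\<Union>j\<le>N (kk i). \<Union>(VV (kk i) j))" by (rule subsetD[OF conjunct2[OF NV[of "kk i"]] p(3)])
      then obtain j V where jV: "j \<le> N (kk i)" "V \<in> VV (kk i) j" "y \<in> V" by auto
      define m where "m = kk i + j"
      have im: "kk i \<le> m" "m < kk (Suc i)" using jV by (auto simp: m_def kkS)
      have "kk (Suc i) \<le> kk (Suc nX)" using strict_mono_less_eq[OF smk, of "Suc i" "Suc nX"] iU(1) by simp
      then have mle: "m \<le> kk (Suc nX)" using im by linarith
      have "U \<times> V \<in> P i m" unfolding P_def m_def using iU jV by auto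
      then have "U \<times> V \<in> W m" using Weq[OF iU(1) im] by simp
      moreover have "p \<in> U \<times> V" using p iU jV by simp
      ultimately show "p \<in> (\<Union>i\<le>kk (Suc nX). \<Union>(W i))" using mle by blast
    qed
  qed
qed

end
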